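(* Suppose $f$ has equal algebraic and topological degrees $d=\lambda_2\ge 2$. Let $p\in\mathbb{P}^2$ be a point such that $f(p)$ is a regular value of $f$ with $\lambda_2$ distinct $f$-preimages, all outside $\mathcal{I}$. Let $L,L'$ be lines through $p$ that do not meet $\mathcal{I}$ and have distinct images $f(L)\neq f(L')$. Then at least one of the irreducible curves $f(L)$, $f(L')$ is not a line.
   Context: $f:\mathbb{P}^2\dashrightarrow\mathbb{P}^2$ is a dominant rational map with algebraic degree $d$, topological degree $\lambda_2$ (number of preimages of a generic point) and finite indeterminacy set $\mathcal{I}$. For a curve $V$, $f(V):=\overline{f(V\setminus\mathcal{I})}$. *)

theory Defs
  imports "HOL-Analysis.Analysis"
begin

text \<open>Points of P^2 are represented by nonzero vectors of C^3; subsets of P^2 by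
  cones of nonzero vectors (sets closed under nonzero scaling).\<close>

type_synonym vec3 = "complex \<times> complex \<times> complex"
type_synonym poly3 = "nat \<times> nat \<times> nat \<Rightarrow> complex"
type_synonym ratmap = "poly3 \<times> poly3 \<times> poly3"

fun smult3 :: "complex \<Rightarrow> vec3 \<Rightarrow> vec3" where
  "smult3 c (x, y, z) = (c * x, c * y, c * z)"

fun dot3 :: "vec3 \<Rightarrow> vec3 \<Rightarrow> complex" where
  "dot3 (a, b, e) (x, y, z) = a * x + b * y + e * z"

definition supp3 :: "poly3 \<Rightarrow> (nat \<times> nat \<times> nat) set" where
  "supp3 p = {m. p m \<noteq> 0}"

definition is_poly3 :: "poly3 \<Rightarrow> bool" where
  "is_poly3 p \<longleftrightarrow> finite (supp3 p)"

definition homog3 :: "nat \<Rightarrow> poly3 \<Rightarrow> bool" where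
  "homog3 d p \<longleftrightarrow> is_poly3 p \<and> (\<forall>i j k. p (i, j, k) \<noteq> 0 \<longrightarrow> i + j + k = d)"

fun peval :: "poly3 \<Rightarrow> vec3 \<Rightarrow> complex" where
  "peval p (x, y, z) = (\<Sum>(i, j, k) \<in> supp3 p. p (i, j, k) * x ^ i * y ^ j * z ^ k)"

fun pmul :: "poly3 \<Rightarrow> poly3 \<Rightarrow> poly3" where
  "pmul g q (a, b, c) =
     (\<Sum>i\<le>a. \<Sum>j\<le>b. \<Sum>k\<le>c. g (i, j, k) * q (a - i, b - j, c - k))"

fun pd0 :: "poly3 \<Rightarrow> vec3 \<Rightarrow> complex" where
  "pd0 p (x, y, z) = (\<Sum>(i, j, k) \<in> supp3 p. p (i, j, k) * of_nat i * x ^ (i - 1) * y ^ j * z ^ k)"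
fun pd1 :: "poly3 \<Rightarrow> vec3 \<Rightarrow> complex" where
  "pd1 p (x, y, z) = (\<Sum>(i, j, k) \<in> supp3 p. p (i, j, k) * of_nat j * x ^ i * y ^ (j - 1) * z ^ k)"
fun pd2 :: "poly3 \<Rightarrow> vec3 \<Rightarrow> complex" where
  "pd2 p (x, y, z) = (\<Sum>(i, j, k) \<in> supp3 p. p (i, j, k) * of_nat k * x ^ i * y ^ j * z ^ (k - 1))"

fun det3 :: "vec3 \<Rightarrow> vec3 \<Rightarrow> vec3 \<Rightarrow> complex" where
  "det3 (a, b, c) (d, e, f) (g, h, i) =
     a * (e * i - f * h) - b * (d * i - f * g) + c * (d * h - e * g)"

fun ratmap_deg :: "ratmap \<Rightarrow> nat \<Rightarrow> bool" where
  "ratmap_deg (F0, F1, F2) d \<longleftrightarrow>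
     homog3 d F0 \<and> homog3 d F1 \<and> homog3 d F2 \<and>
     \<not> (F0 = (\<lambda>_. 0) \<and> F1 = (\<lambda>_. 0) \<and> F2 = (\<lambda>_. 0)) \<and>
     \<not> (\<exists>g q0 q1 q2. is_poly3 g \<and> is_poly3 q0 \<and> is_poly3 q1 \<and> is_poly3 q2 \<and>
           (\<exists>m. m \<noteq> (0, 0, 0) \<and> g m \<noteq> 0) \<and>
           F0 = pmul g q0 \<and> F1 = pmul g q1 \<and> F2 = pmul g q2)"

fun Fmap :: "ratmap \<Rightarrow> vec3 \<Rightarrow> vec3" where
  "Fmap (F0, F1, F2) v = (peval F0 v, peval F1 v, peval F2 v)"

fun jacdet :: "ratmap \<Rightarrow> vec3 \<Rightarrow> complex" where
  "jacdet (F0, F1, F2) v =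
     det3 (pd0 F0 v, pd1 F0 v, pd2 F0 v) (pd0 F1 v, pd1 F1 v, pd2 F1 v)
          (pd0 F2 v, pd1 F2 v, pd2 F2 v)"

definition indet :: "ratmap \<Rightarrow> vec3 set" where
  "indet F = {v. v \<noteq> 0 \<and> Fmap F v = 0}"

definition proj_pt :: "vec3 \<Rightarrow> vec3 set" where
  "proj_pt v = {smult3 c v | c. c \<noteq> 0}"

definition preimages :: "ratmap \<Rightarrow> vec3 \<Rightarrow> vec3 set set" where
  "preimages F w = {proj_pt v | v. v \<noteq> 0 \<and> v \<notin> indet F \<and> Fmap F v \<in> proj_pt w}"

text \<open>Points of the total transform of the indeterminacy set: limits of f(x_n) with
  x_n tending to an indeterminacy point (classical topology of P^2).\<close>
definition indet_image :: "ratmap \<Rightarrow> vec3 set" where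
  "indet_image F = {w. w \<noteq> 0 \<and> (\<exists>x \<in> indet F. \<exists>vs cs.
      (\<forall>n. vs n \<noteq> 0 \<and> vs n \<notin> indet F) \<and> vs \<longlonglongrightarrow> x \<and>
      (\<lambda>n. smult3 (cs n) (Fmap F (vs n))) \<longlonglongrightarrow> w)}"

definition zclosure :: "vec3 set \<Rightarrow> vec3 set" where
  "zclosure S = {w. w \<noteq> 0 \<and> (\<forall>h d. homog3 d h \<longrightarrow> (\<forall>v\<in>S. peval h v = 0) \<longrightarrow> peval h w = 0)}"

definition image_set :: "ratmap \<Rightarrow> vec3 set \<Rightarrow> vec3 set" where
  "image_set F V = zclosure {smult3 c (Fmap F v) | c v. c \<noteq> 0 \<and> v \<in> V \<and> v \<notin> indet F}"

definition dominant :: "ratmap \<Rightarrow> bool" where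
  "dominant F \<longleftrightarrow> image_set F {v. v \<noteq> 0} = {v. v \<noteq> 0}"

text \<open>Topological degree n: a generic point (outside a proper algebraic curve) has
  exactly n preimages.\<close>
definition topdeg :: "ratmap \<Rightarrow> nat \<Rightarrow> bool" where
  "topdeg F n \<longleftrightarrow> (\<exists>h e. homog3 e h \<and> h \<noteq> (\<lambda>_. 0) \<and>
      (\<forall>w. w \<noteq> 0 \<and> peval h w \<noteq> 0 \<longrightarrow> finite (preimages F w) \<and> card (preimages F w) = n))"

text \<open>Regular value: f is a local biholomorphism at every preimage (outside I),
  i.e. the Jacobian determinant of the homogeneous lift does not vanish there.\<close>
definition regular_value :: "ratmap \<Rightarrow> vec3 \<Rightarrow> bool" where
  "regular_value F w \<longleftrightarrow> (\<forall>v. v \<noteq> 0 \<and> v \<notin> indet F \<and> Fmap F v \<in> proj_pt w \<longrightarrow> jacdet F v \<noteq> 0)"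

definition line :: "vec3 \<Rightarrow> vec3 set" where
  "line a = {v. v \<noteq> 0 \<and> dot3 a v = 0}"

definition is_line :: "vec3 set \<Rightarrow> bool" where
  "is_line S \<longleftrightarrow> (\<exists>a. a \<noteq> 0 \<and> S = line a)"

end

theory Submission imports Defs "HOL-Computational_Algebra.Fundamental_Theorem_Algebra" begin


lemma coeff_mult_bound:
  fixes p q :: "'a::comm_semiring_0 poly"
  assumes "degree p \<le> m" "degree q \<le> n"
  shows "coeff (p * q) (m + n) = coeff p m * coeff q n"
proof -
  have "coeff (p * q) (m + n) = (\<Sum>i\<le>m+n. coeff p i * coeff q (m + n - i))" by (rule coeff_mult)
  also have "\<dots> = (\<Sum>i\<in>{m}. coeff p i * coeff q (m + n - i))"
  proof (rule sum.mono_neutral_right)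
    show "\<forall>i\<in>{..m + n} - {m}. coeff p i * coeff q (m + n - i) = 0"
    proof
      fix i assume "i \<in> {..m + n} - {m}"
      then have "i < m \<or> i > m" by auto
      then show "coeff p i * coeff q (m + n - i) = 0"
      proof
        assume "i < m" then have "m + n - i > n" by auto
        then have "coeff q (m+n-i) = 0" using assms(2) by (intro coeff_eq_0) auto
        then show ?thesis by simp
      next
        assume "i > m" then have "coeff p i = 0" using assms(1) by (intro coeff_eq_0) auto
        then show ?thesis by simp
      qed
    qed
  qed auto
  finally show ?thesis by simp
qed

lemma coeff_lin_pow: "coeff ([:a, b:] ^ n) n = (b::'a::comm_ring_1) ^ n \<and> degree ([:a, b:] ^ n) \<le> n"
proof (induction n)
  case 0 then show ?case by simp
next
  case (Suc n)
  have d1: "degree [:a,b:] \<le> 1" by simp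
  have "coeff ([:a, b:] ^ Suc n) (Suc n) = coeff ([:a,b:] * [:a, b:] ^ n) (1 + n)" by simp
  also have "\<dots> = b * b ^ n" using coeff_mult_bound[OF d1, of "[:a, b:] ^ n" n] Suc by simp
  finally show ?case using Suc degree_mult_le[of "[:a,b:]" "[:a, b:] ^ n"] d1 by simp
qed

lemma rsquarefree_card:
  fixes p :: "complex poly"
  assumes "rsquarefree p"
  shows "card {x. poly p x = 0} = degree p"
proof -
  have p0: "p \<noteq> 0" using assms by (simp add: rsquarefree_def)
  have fin: "finite {x. poly p x = 0}" using poly_roots_finite[OF p0] .
  have "degree p = degree (smult (lead_coeff p) (\<Prod>z|poly p z = 0. [:-z, 1:]))"
    using complex_poly_decompose_rsquarefree[OF assms] by simp
  also have "\<dots> = degree (\<Prod>z|poly p z = 0. [:-z, 1:])" using p0 by simp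
  also have "\<dots> = (\<Sum>z|poly p z = 0. degree [:-z, 1:])"
    by (rule degree_prod_eq_sum_degree) auto
  also have "\<dots> = card {x. poly p x = 0}" by simp
  finally show ?thesis by simp
qed


fun cross3 :: "vec3 \<Rightarrow> vec3 \<Rightarrow> vec3" where
  "cross3 (a0,a1,a2) (b0,b1,b2) = (a1*b2 - a2*b1, a2*b0 - a0*b2, a0*b1 - a1*b0)"

fun lin3 :: "vec3 \<Rightarrow> vec3 \<Rightarrow> complex \<Rightarrow> vec3" where
  "lin3 (q0,q1,q2) (u0,u1,u2) t = (q0 + t*u0, q1 + t*u1, q2 + t*u2)"

fun lpoly :: "poly3 \<Rightarrow> vec3 \<Rightarrow> vec3 \<Rightarrow> complex poly" where
  "lpoly h (q0,q1,q2) (u0,u1,u2) =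
     (\<Sum>(i,j,k)\<in>supp3 h. smult (h(i,j,k)) ([:q0,u0:]^i * [:q1,u1:]^j * [:q2,u2:]^k))"

lemma vec3_zero_iff: "((x,y,z)::vec3) = 0 \<longleftrightarrow> x = 0 \<and> y = 0 \<and> z = 0"
  by (simp add: zero_prod_def)

lemma homog_supp: "homog3 d h \<Longrightarrow> (i,j,k) \<in> supp3 h \<Longrightarrow> i + j + k = d"
  by (auto simp: homog3_def supp3_def)

lemma peval_smult:
  assumes "homog3 d h"
  shows "peval h (smult3 c v) = c ^ d * peval h v"
proof -
  obtain x y z where v: "v = (x,y,z)" by (cases v) auto
  have "peval h (smult3 c v) = (\<Sum>m\<in>supp3 h. c ^ d * (case m of (i,j,k) \<Rightarrow> h (i,j,k) * x^i * y^j * z^k))"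
    unfolding v smult3.simps peval.simps
  proof (rule sum.cong[OF refl])
    fix m assume m: "m \<in> supp3 h"
    obtain i j k where mm: "m = (i,j,k)" by (cases m) auto
    have "i + j + k = d" using homog_supp[OF assms] m mm by simp
    then have "c ^ d = c^i * c^j * c^k" by (simp add: power_add[symmetric])
    then show "(case m of (i, j, k) \<Rightarrow> h (i, j, k) * (c * x) ^ i * (c * y) ^ j * (c * z) ^ k) =
          c ^ d * (case m of (i, j, k) \<Rightarrow> h (i, j, k) * x ^ i * y ^ j * z ^ k)"
      by (simp add: mm power_mult_distrib)
  qed
  also have "\<dots> = c ^ d * peval h v" by (simp add: v sum_distrib_left)
  finally show ?thesis .
qed

lemma euler3:
  assumes "homog3 d h"
  shows "x * pd0 h (x,y,z) + y * pd1 h (x,y,z) + z * pd2 h (x,y,z) = of_nat d * peval h (x,y,z)"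
proof -
  have "x * pd0 h (x,y,z) + y * pd1 h (x,y,z) + z * pd2 h (x,y,z) =
    (\<Sum>m\<in>supp3 h. (case m of (i,j,k) \<Rightarrow> x * (h (i, j, k) * of_nat i * x ^ (i - 1) * y ^ j * z ^ k)
       + y * (h (i, j, k) * of_nat j * x ^ i * y ^ (j - 1) * z ^ k)
       + z * (h (i, j, k) * of_nat k * x ^ i * y ^ j * z ^ (k - 1))))"
    by (simp add: sum_distrib_left sum.distrib split_def)
  also have "\<dots> = (\<Sum>m\<in>supp3 h. of_nat d * (case m of (i,j,k) \<Rightarrow> h (i,j,k) * x^i * y^j * z^k))"
  proof (rule sum.cong[OF refl])
    fix m assume m: "m \<in> supp3 h"
    obtain i j k where mm: "m = (i,j,k)" by (cases m) auto
    have d: "i + j + k = d" using homog_supp[OF assms] m mm by simp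
    have e1: "x * (of_nat i * x ^ (i - 1)) = of_nat i * x ^ i" for x :: complex and i :: nat
      by (cases i) auto
    have h1: "x * (h (i, j, k) * of_nat i * x ^ (i - 1) * y ^ j * z ^ k) = of_nat i * (h (i,j,k) * x^i * y^j * z^k)"
      by (cases i) (simp_all add: mult_ac)
    have h2: "y * (h (i, j, k) * of_nat j * x ^ i * y ^ (j - 1) * z ^ k) = of_nat j * (h (i,j,k) * x^i * y^j * z^k)"
      by (cases j) (simp_all add: mult_ac)
    have h3: "z * (h (i, j, k) * of_nat k * x ^ i * y ^ j * z ^ (k - 1)) = of_nat k * (h (i,j,k) * x^i * y^j * z^k)"
      by (cases k) (simp_all add: mult_ac)
    show "(case m of (i,j,k) \<Rightarrow> x * (h (i, j, k) * of_nat i * x ^ (i - 1) * y ^ j * z ^ k)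
       + y * (h (i, j, k) * of_nat j * x ^ i * y ^ (j - 1) * z ^ k)
       + z * (h (i, j, k) * of_nat k * x ^ i * y ^ j * z ^ (k - 1))) =
       of_nat d * (case m of (i,j,k) \<Rightarrow> h (i,j,k) * x^i * y^j * z^k)"
      unfolding mm prod.case h1 h2 h3 by (simp add: d[symmetric] distrib_right)
  qed
  also have "\<dots> = of_nat d * peval h (x,y,z)" by (simp add: sum_distrib_left)
  finally show ?thesis .
qed

lemma mono_deriv:
  "((\<lambda>t. c * (q0 + t*u0)^i * (q1 + t*u1)^j * (q2 + t*u2)^k) has_field_derivative
     (c * of_nat i * (q0 + t*u0) ^ (i - 1) * (q1 + t*u1)^j * (q2 + t*u2)^k * u0
    + c * of_nat j * (q0 + t*u0) ^ i * (q1 + t*u1)^(j-1) * (q2 + t*u2)^k * u1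
    + c * of_nat k * (q0 + t*u0) ^ i * (q1 + t*u1)^j * (q2 + t*u2)^(k-1) * u2)) (at t)"
  by (rule derivative_eq_intros refl | simp)+ (simp add: algebra_simps)

lemma peval_lin_deriv:
  assumes "is_poly3 h"
  shows "((\<lambda>t. peval h (lin3 (q0,q1,q2) (u0,u1,u2) t)) has_field_derivative
     (pd0 h (lin3 (q0,q1,q2) (u0,u1,u2) t) * u0 + pd1 h (lin3 (q0,q1,q2) (u0,u1,u2) t) * u1
      + pd2 h (lin3 (q0,q1,q2) (u0,u1,u2) t) * u2)) (at t)"
proof -
  have fin: "finite (supp3 h)" using assms by (simp add: is_poly3_def)
  have "((\<lambda>t. \<Sum>m\<in>supp3 h. (case m of (i,j,k) \<Rightarrow> h(i,j,k) * (q0 + t*u0)^i * (q1 + t*u1)^j * (q2 + t*u2)^k))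
     has_field_derivative (\<Sum>m\<in>supp3 h. (case m of (i,j,k) \<Rightarrow>
       h(i,j,k) * of_nat i * (q0 + t*u0) ^ (i - 1) * (q1 + t*u1)^j * (q2 + t*u2)^k * u0
    + h(i,j,k) * of_nat j * (q0 + t*u0) ^ i * (q1 + t*u1)^(j-1) * (q2 + t*u2)^k * u1
    + h(i,j,k) * of_nat k * (q0 + t*u0) ^ i * (q1 + t*u1)^j * (q2 + t*u2)^(k-1) * u2))) (at t)"
    apply (rule DERIV_sum)
    apply (clarsimp split: prod.splits)
    apply (rule mono_deriv[simplified])
    done
  then show ?thesis
    by (simp add: sum_distrib_right sum.distrib split_def)
qed

lemma poly_lpoly: "poly (lpoly h q u) t = peval h (lin3 q u t)"
proof -
  obtain q0 q1 q2 where q: "q = (q0,q1,q2)" by (cases q) auto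
  obtain u0 u1 u2 where u: "u = (u0,u1,u2)" by (cases u) auto
  show ?thesis by (simp add: q u poly_sum split_def algebra_simps)
qed

lemma lpoly_degree_coeff:
  assumes "homog3 d h"
  shows "degree (lpoly h q u) \<le> d \<and> coeff (lpoly h q u) d = peval h u"
proof -
  obtain q0 q1 q2 where q: "q = (q0,q1,q2)" by (cases q) auto
  obtain u0 u1 u2 where u: "u = (u0,u1,u2)" by (cases u) auto
  have fin: "finite (supp3 h)" using assms by (simp add: homog3_def is_poly3_def)
  have key: "degree ([:q0,u0:]^i * [:q1,u1:]^j * [:q2,u2:]^k) \<le> i + j + k \<and>
     coeff ([:q0,u0:]^i * [:q1,u1:]^j * [:q2,u2:]^k) (i + j + k) = u0^i * u1^j * u2^k" for i j k
  proof -
    have A: "degree ([:q0,u0:]^i) \<le> i" "coeff ([:q0,u0:]^i) i = u0^i" using coeff_lin_pow by auto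
    have B: "degree ([:q1,u1:]^j) \<le> j" "coeff ([:q1,u1:]^j) j = u1^j" using coeff_lin_pow by auto
    have C: "degree ([:q2,u2:]^k) \<le> k" "coeff ([:q2,u2:]^k) k = u2^k" using coeff_lin_pow by auto
    have AB: "degree ([:q0,u0:]^i * [:q1,u1:]^j) \<le> i + j"
      using degree_mult_le[of "[:q0,u0:]^i" "[:q1,u1:]^j"] A B by simp
    have cAB: "coeff ([:q0,u0:]^i * [:q1,u1:]^j) (i + j) = u0^i * u1^j"
      using coeff_mult_bound[OF A(1) B(1)] A B by simp
    show ?thesis
      using coeff_mult_bound[OF AB C(1)] cAB C
        degree_mult_le[of "[:q0,u0:]^i * [:q1,u1:]^j" "[:q2,u2:]^k"] AB by simp
  qed
  have deg: "degree (lpoly h q u) \<le> d"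
    unfolding q u lpoly.simps
  proof (rule degree_sum_le[OF fin])
    fix m assume m: "m \<in> supp3 h"
    obtain i j k where mm: "m = (i,j,k)" by (cases m) auto
    have "i + j + k = d" using homog_supp[OF assms] m mm by simp
    then show "degree (case m of (i,j,k) \<Rightarrow> smult (h(i,j,k)) ([:q0,u0:]^i * [:q1,u1:]^j * [:q2,u2:]^k)) \<le> d"
      using key[of i j k] degree_smult_le[of "h(i,j,k)" "[:q0,u0:]^i * [:q1,u1:]^j * [:q2,u2:]^k"]
      by (simp add: mm)
  qed
  have "coeff (lpoly h q u) d = (\<Sum>m\<in>supp3 h. (case m of (i,j,k) \<Rightarrow> h(i,j,k) * u0^i * u1^j * u2^k))"
    unfolding q u lpoly.simps coeff_sum
  proof (rule sum.cong[OF refl])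
    fix m assume m: "m \<in> supp3 h"
    obtain i j k where mm: "m = (i,j,k)" by (cases m) auto
    have "i + j + k = d" using homog_supp[OF assms] m mm by simp
    then show "coeff (case m of (i,j,k) \<Rightarrow> smult (h(i,j,k)) ([:q0,u0:]^i * [:q1,u1:]^j * [:q2,u2:]^k)) d
       = (case m of (i,j,k) \<Rightarrow> h(i,j,k) * u0^i * u1^j * u2^k)"
      using key[of i j k] by (auto simp: mm)
  qed
  then show ?thesis using deg by (simp add: u)
qed



lemma det3_kernel:
  assumes "dot3 r1 k = 0" "dot3 r2 k = 0" "dot3 r3 k = 0" "k \<noteq> 0"
  shows "det3 r1 r2 r3 = 0"
proof -
  obtain a b c where r1: "r1 = (a,b,c)" by (cases r1) auto
  obtain d e f where r2: "r2 = (d,e,f)" by (cases r2) auto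
  obtain g h i where r3: "r3 = (g,h,i)" by (cases r3) auto
  obtain x y z where k: "k = (x,y,z)" by (cases k) auto
  have e: "a*x+b*y+c*z = 0" "d*x+e*y+f*z=0" "g*x+h*y+i*z=0" using assms by (simp_all add: r1 r2 r3 k)
  have "det3 r1 r2 r3 * x = 0" "det3 r1 r2 r3 * y = 0" "det3 r1 r2 r3 * z = 0"
    unfolding r1 r2 r3 det3.simps using e by algebra+
  moreover have "x \<noteq> 0 \<or> y \<noteq> 0 \<or> z \<noteq> 0" using assms(4) by (simp add: k vec3_zero_iff)
  ultimately show ?thesis by auto
qed

lemma cross_parallel:
  assumes "cross3 y x = 0" "x \<noteq> 0"
  shows "\<exists>l. y = smult3 l x"
proof -
  obtain a b c where x: "x = (a,b,c)" by (cases x) auto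
  obtain d e f where y: "y = (d,e,f)" by (cases y) auto
  have e: "e*c - f*b = 0" "f*a - d*c = 0" "d*b - e*a = 0" using assms(1) by (simp_all add: x y vec3_zero_iff)
  have "a \<noteq> 0 \<or> b \<noteq> 0 \<or> c \<noteq> 0" using assms(2) by (simp add: x vec3_zero_iff)
  then show ?thesis
  proof (elim disjE)
    assume "a \<noteq> 0" then show ?thesis using e
      by (intro exI[of _ "d/a"]) (auto simp: x y field_simps)
  next
    assume "b \<noteq> 0" then show ?thesis using e
      by (intro exI[of _ "e/b"]) (auto simp: x y field_simps)
  next
    assume "c \<noteq> 0" then show ?thesis using e
      by (intro exI[of _ "f/c"]) (auto simp: x y field_simps)
  qed
qed

lemma perp_cross:
  assumes "dot3 b y = 0" "dot3 b x = 0" "dot3 e b \<noteq> 0" "dot3 (cross3 x e) y = 0"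
  shows "cross3 y x = 0"
proof -
  have b0: "b \<noteq> 0" using assms(3) by (cases e) (auto simp: zero_prod_def)
  have "cross3 (cross3 y x) b = 0"
  proof -
    obtain b0 b1 b2 where bb: "b = (b0,b1,b2)" by (cases b) auto
    obtain x0 x1 x2 where xx: "x = (x0,x1,x2)" by (cases x) auto
    obtain y0 y1 y2 where yy: "y = (y0,y1,y2)" by (cases y) auto
    have h: "b0*y0+b1*y1+b2*y2 = 0" "b0*x0+b1*x1+b2*x2 = 0" using assms(1,2) by (simp_all add: bb xx yy)
    show ?thesis unfolding bb xx yy cross3.simps vec3_zero_iff using h by algebra
  qed
  then obtain l where l: "cross3 y x = smult3 l b" using cross_parallel b0 by blast
  have "dot3 e (cross3 y x) = 0" using assms(4)
    by (cases e; cases x; cases y) (auto simp: algebra_simps)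
  then have "l * dot3 e b = 0" unfolding l by (cases e; cases b) (auto simp: algebra_simps)
  then have "l = 0" using assms(3) by simp
  then show ?thesis using l by (cases b) (simp add: vec3_zero_iff)
qed

lemma indep:
  assumes "cross3 w p \<noteq> 0" "lin3 (smult3 s p) w t = 0"
  shows "s = 0 \<and> t = 0"
proof -
  obtain a b c where p: "p = (a,b,c)" by (cases p) auto
  obtain d e f where w: "w = (d,e,f)" by (cases w) auto
  have h: "s*a + t*d = 0" "s*b+t*e = 0" "s*c+t*f=0" using assms(2) by (simp_all add: p w vec3_zero_iff)
  have nz: "e*c - f*b \<noteq> 0 \<or> f*a - d*c \<noteq> 0 \<or> d*b - e*a \<noteq> 0" using assms(1) by (simp add: p w vec3_zero_iff)
  have "t * (e*c - f*b) = 0" "t*(f*a - d*c) = 0" "t*(d*b - e*a) = 0" using h by algebra+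
  then have t: "t = 0" using nz by auto
  have "s * (e*c - f*b) = 0" "s*(f*a - d*c) = 0" "s*(d*b - e*a) = 0" using h by algebra+
  then have "s = 0" using nz by auto
  with t show ?thesis by simp
qed

lemma unit_nonzero: "b \<noteq> 0 \<Longrightarrow> \<exists>e. dot3 e b \<noteq> 0"
proof -
  assume "b \<noteq> 0"
  moreover obtain b0 b1 b2 where bb: "b = (b0,b1,b2)" by (cases b) auto
  ultimately have "b0 \<noteq> 0 \<or> b1 \<noteq> 0 \<or> b2 \<noteq> 0" by (simp add: vec3_zero_iff)
  then show ?thesis
  proof (elim disjE)
    assume "b0 \<noteq> 0" then show ?thesis by (intro exI[of _ "(1,0,0)"]) (simp add: bb)
  next
    assume "b1 \<noteq> 0" then show ?thesis by (intro exI[of _ "(0,1,0)"]) (simp add: bb)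
  next
    assume "b2 \<noteq> 0" then show ?thesis by (intro exI[of _ "(0,0,1)"]) (simp add: bb)
  qed
qed



definition Jrow :: "poly3 \<Rightarrow> vec3 \<Rightarrow> vec3" where
  "Jrow h v = (pd0 h v, pd1 h v, pd2 h v)"

fun Jap :: "ratmap \<Rightarrow> vec3 \<Rightarrow> vec3 \<Rightarrow> vec3" where
  "Jap (F0,F1,F2) v u = (dot3 (Jrow F0 v) u, dot3 (Jrow F1 v) u, dot3 (Jrow F2 v) u)"

lemma jacdet_Jrow: "jacdet (F0,F1,F2) v = det3 (Jrow F0 v) (Jrow F1 v) (Jrow F2 v)"
  by (simp add: Jrow_def)

lemma ratmap_homog: "ratmap_deg (F0,F1,F2) d \<Longrightarrow> homog3 d F0 \<and> homog3 d F1 \<and> homog3 d F2"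
  by simp

lemma dot_Jrow_self: "homog3 d h \<Longrightarrow> dot3 (Jrow h v) v = of_nat d * peval h v"
proof -
  assume h: "homog3 d h"
  obtain x y z where v: "v = (x,y,z)" by (cases v) auto
  show ?thesis using euler3[OF h, of x y z] by (simp add: v Jrow_def mult.commute)
qed

lemma dot_lin: "dot3 r (lin3 (smult3 s v) w t) = s * dot3 r v + t * dot3 r w"
  by (cases r; cases v; cases w) (simp add: algebra_simps)

lemma jac_zero:
  assumes F: "ratmap_deg F d" and d: "1 \<le> d" and ind: "cross3 w v \<noteq> 0"
    and x0: "Fmap F v \<noteq> 0" and bx: "dot3 b (Fmap F v) = 0" and eb: "dot3 e b \<noteq> 0"
    and bg: "dot3 b (Jap F v w) = 0" and cg: "dot3 (cross3 (Fmap F v) e) (Jap F v w) = 0"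
  shows "jacdet F v = 0"
proof -
  obtain F0 F1 F2 where FF: "F = (F0,F1,F2)" by (cases F) auto
  have hF: "homog3 d F0" "homog3 d F1" "homog3 d F2" using F by (simp_all add: FF)
  define x where "x = Fmap F v"
  define g where "g = Jap F v w"
  have "cross3 g x = 0" using perp_cross[OF bg[folded g_def] bx[folded x_def] eb cg[folded x_def g_def]] .
  then obtain mu where mu: "g = smult3 mu x" using cross_parallel x0 x_def by blast
  define k where "k = lin3 (smult3 mu v) w (- of_nat d)"
  have k0: "k \<noteq> 0"
  proof
    assume "k = 0"
    then have "- (of_nat d :: complex) = 0" using indep[OF ind] unfolding k_def by blast
    then show False using d by simp
  qed
  have gx: "dot3 (Jrow F0 v) w = mu * peval F0 v" "dot3 (Jrow F1 v) w = mu * peval F1 v"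
     "dot3 (Jrow F2 v) w = mu * peval F2 v"
    using mu by (simp_all add: g_def x_def FF)
  have "dot3 (Jrow F0 v) k = 0" "dot3 (Jrow F1 v) k = 0" "dot3 (Jrow F2 v) k = 0"
    unfolding k_def dot_lin using gx dot_Jrow_self[OF hF(1)] dot_Jrow_self[OF hF(2)] dot_Jrow_self[OF hF(3)]
    by (simp_all add: algebra_simps)
  then have "det3 (Jrow F0 v) (Jrow F1 v) (Jrow F2 v) = 0" using det3_kernel k0 by blast
  then show ?thesis by (simp only: FF jacdet_Jrow)
qed

lemma dotF_deriv:
  assumes F: "ratmap_deg F d"
  shows "((\<lambda>t. dot3 c (Fmap F (lin3 p w t))) has_field_derivative dot3 c (Jap F (lin3 p w t) w)) (at t)"
proof -
  obtain F0 F1 F2 where FF: "F = (F0,F1,F2)" by (cases F) auto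
  have hF: "is_poly3 F0" "is_poly3 F1" "is_poly3 F2" using F by (simp_all add: FF homog3_def)
  obtain c0 c1 c2 where cc: "c = (c0,c1,c2)" by (cases c) auto
  obtain p0 p1 p2 where pp: "p = (p0,p1,p2)" by (cases p) auto
  obtain w0 w1 w2 where ww: "w = (w0,w1,w2)" by (cases w) auto
  note D0 = peval_lin_deriv[OF hF(1), of p0 p1 p2 w0 w1 w2 t]
  note D1 = peval_lin_deriv[OF hF(2), of p0 p1 p2 w0 w1 w2 t]
  note D2 = peval_lin_deriv[OF hF(3), of p0 p1 p2 w0 w1 w2 t]
  have "((\<lambda>t. c0 * peval F0 (lin3 (p0,p1,p2) (w0,w1,w2) t) + c1 * peval F1 (lin3 (p0,p1,p2) (w0,w1,w2) t)
          + c2 * peval F2 (lin3 (p0,p1,p2) (w0,w1,w2) t)) has_field_derivative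
        c0 * (pd0 F0 (lin3 (p0,p1,p2) (w0,w1,w2) t) * w0 + pd1 F0 (lin3 (p0,p1,p2) (w0,w1,w2) t) * w1
      + pd2 F0 (lin3 (p0,p1,p2) (w0,w1,w2) t) * w2) +
        c1 * (pd0 F1 (lin3 (p0,p1,p2) (w0,w1,w2) t) * w0 + pd1 F1 (lin3 (p0,p1,p2) (w0,w1,w2) t) * w1
      + pd2 F1 (lin3 (p0,p1,p2) (w0,w1,w2) t) * w2) +
        c2 * (pd0 F2 (lin3 (p0,p1,p2) (w0,w1,w2) t) * w0 + pd1 F2 (lin3 (p0,p1,p2) (w0,w1,w2) t) * w1
      + pd2 F2 (lin3 (p0,p1,p2) (w0,w1,w2) t) * w2)) (at t)"
    by (intro DERIV_add DERIV_cmult D0 D1 D2)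
  then show ?thesis
    by (simp add: FF cc pp ww Jrow_def algebra_simps del: lin3.simps)
qed



lemma smult3_one[simp]: "smult3 1 v = v" by (cases v) auto
lemma dot_smult: "dot3 a (smult3 c v) = c * dot3 a v" by (cases a; cases v) (simp add: algebra_simps)
lemma mem_proj_pt: "v \<in> proj_pt v" unfolding proj_pt_def by (intro CollectI exI[of _ 1]) simp

lemma Fmap_nz: "v \<noteq> 0 \<Longrightarrow> v \<notin> indet F \<Longrightarrow> Fmap F v \<noteq> 0"
  by (simp add: indet_def)

lemma Fmap_in_image:
  assumes "v \<in> V" "v \<notin> indet F" "Fmap F v \<noteq> 0"
  shows "Fmap F v \<in> image_set F V"
  unfolding image_set_def zclosure_def
proof (intro CollectI conjI allI impI)
  show "Fmap F v \<noteq> 0" by fact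
  fix h d assume "\<forall>u\<in>{smult3 c (Fmap F v) |c v. c \<noteq> 0 \<and> v \<in> V \<and> v \<notin> indet F}. peval h u = 0"
  moreover have "Fmap F v \<in> {smult3 c (Fmap F v) |c v. c \<noteq> 0 \<and> v \<in> V \<and> v \<notin> indet F}"
    using assms by (intro CollectI exI[of _ 1] exI[of _ v]) simp
  ultimately show "peval h (Fmap F v) = 0" by blast
qed

lemma Fmap_smult: "ratmap_deg F d \<Longrightarrow> Fmap F (smult3 l v) = smult3 (l^d) (Fmap F v)"
proof -
  assume F: "ratmap_deg F d"
  obtain F0 F1 F2 where FF: "F = (F0,F1,F2)" by (cases F) auto
  have hF: "homog3 d F0" "homog3 d F1" "homog3 d F2" using F by (simp_all add: FF)
  show ?thesis by (simp add: FF peval_smult[OF hF(1)] peval_smult[OF hF(2)] peval_smult[OF hF(3)])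
qed

lemma proj_inj:
  assumes ind: "cross3 w p \<noteq> 0" and eq: "proj_pt (lin3 p w t) = proj_pt (lin3 p w t')"
  shows "t = t'"
proof -
  have "lin3 p w t \<in> proj_pt (lin3 p w t')" using eq mem_proj_pt by metis
  then obtain c where c: "lin3 p w t = smult3 c (lin3 p w t')" unfolding proj_pt_def by blast
  have "lin3 (smult3 (1 - c) p) w (t - c * t') = 0"
    using c by (cases p; cases w) (auto simp: vec3_zero_iff algebra_simps)
  from indep[OF ind this] show ?thesis by simp
qed

lemma lin_line: "dot3 a p = 0 \<Longrightarrow> dot3 a w = 0 \<Longrightarrow> dot3 a (lin3 p w t) = 0"
  using dot_lin[of a 1 p w t] by simp

lemma lin_nz: "cross3 w p \<noteq> 0 \<Longrightarrow> lin3 p w t \<noteq> 0"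
  using indep[of w p 1 t] by auto

lemma cross_lin: "cross3 w (lin3 p w t) = cross3 w p"
  by (cases p; cases w) (simp add: algebra_simps)

lemma other_point:
  assumes "dot3 a p = 0" "p \<noteq> 0" "a \<noteq> 0"
  shows "\<exists>w. dot3 a w = 0 \<and> cross3 w p \<noteq> 0"
proof -
  obtain e where e: "dot3 e p \<noteq> 0" using unit_nonzero assms(2) by blast
  have "cross3 (cross3 e a) p = smult3 (dot3 e p) a"
  proof -
    obtain a0 a1 a2 where aa: "a = (a0,a1,a2)" by (cases a) auto
    obtain p0 p1 p2 where pp: "p = (p0,p1,p2)" by (cases p) auto
    obtain e0 e1 e2 where ee: "e = (e0,e1,e2)" by (cases e) auto
    have h: "a0*p0+a1*p1+a2*p2 = 0" using assms(1) by (simp add: aa pp)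
    show ?thesis unfolding aa pp ee cross3.simps smult3.simps dot3.simps prod.inject using h by algebra
  qed
  moreover have "smult3 (dot3 e p) a \<noteq> 0" using e assms(3)
    by (cases a) (auto simp: vec3_zero_iff)
  moreover have "dot3 a (cross3 e a) = 0" by (cases a; cases e) (simp add: algebra_simps)
  ultimately show ?thesis by metis
qed



lemma main_line:
  assumes F: "ratmap_deg F d" and d: "1 \<le> d" and p0: "p \<noteq> 0" and ap: "dot3 a p = 0" and a0: "a \<noteq> 0"
    and LI: "line a \<inter> indet F = {}" and reg: "regular_value F (Fmap F p)"
    and fin: "finite (preimages F (Fmap F p))" and img: "image_set F (line a) = line b" and b0: "b \<noteq> 0"
  shows "\<exists>w T. cross3 w p \<noteq> 0 \<and> dot3 a w = 0 \<and> finite T \<and> card T = d \<and>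
     inj_on (\<lambda>t. proj_pt (lin3 p w t)) T \<and> (\<lambda>t. proj_pt (lin3 p w t)) ` T \<subseteq> preimages F (Fmap F p)"
proof -
  define x where "x = Fmap F p"
  have inL: "v \<in> line a \<longleftrightarrow> v \<noteq> 0 \<and> dot3 a v = 0" for v by (simp add: line_def)
  have nI: "v \<in> line a \<Longrightarrow> v \<notin> indet F" for v using LI by blast
  have Fnz: "v \<in> line a \<Longrightarrow> Fmap F v \<noteq> 0" for v using Fmap_nz nI inL by blast
  have bF: "v \<in> line a \<Longrightarrow> dot3 b (Fmap F v) = 0" for v
  proof -
    assume v: "v \<in> line a"
    have "Fmap F v \<in> line b" using Fmap_in_image[OF v nI[OF v] Fnz[OF v]] img by simp
    then show ?thesis by (simp add: line_def)
  qed
  have pL: "p \<in> line a" using p0 ap inL by simp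
  have x0: "x \<noteq> 0" using Fnz[OF pL] x_def by simp
  have bx: "dot3 b x = 0" using bF[OF pL] x_def by simp
  obtain e where eb: "dot3 e b \<noteq> 0" using unit_nonzero b0 by blast
  define c where "c = cross3 x e"
  have cx: "dot3 c x = 0" unfolding c_def by (cases x; cases e) (simp add: algebra_simps)
  have pre: "proj_pt v \<in> preimages F x" if v: "v \<in> line a" and cv: "dot3 c (Fmap F v) = 0" for v
  proof -
    have "cross3 (Fmap F v) x = 0"
      using perp_cross[OF bF[OF v] bx eb] cv by (simp add: c_def)
    then obtain l where l: "Fmap F v = smult3 l x" using cross_parallel x0 by blast
    have "l \<noteq> 0" using Fnz[OF v] l by (cases x) (auto simp: vec3_zero_iff)
    then have "Fmap F v \<in> proj_pt x" using l by (auto simp: proj_pt_def)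
    then show ?thesis using v nI[OF v] inL unfolding preimages_def by blast
  qed
  obtain w0 where w0: "dot3 a w0 = 0" "cross3 w0 p \<noteq> 0" using other_point[OF ap p0 a0] by blast
  have lin_in: "cross3 w p \<noteq> 0 \<Longrightarrow> dot3 a w = 0 \<Longrightarrow> lin3 p w t \<in> line a" for w t
    using lin_line[OF ap] lin_nz inL by blast
  have "\<exists>w. w \<in> line a \<and> dot3 c (Fmap F w) \<noteq> 0"
  proof (rule ccontr)
    assume "\<not> ?thesis"
    then have all: "v \<in> line a \<Longrightarrow> dot3 c (Fmap F v) = 0" for v by blast
    have "range (\<lambda>t. proj_pt (lin3 p w0 t)) \<subseteq> preimages F x"
      using pre all lin_in[OF w0(2,1)] by blast
    moreover have "inj (\<lambda>t. proj_pt (lin3 p w0 t))" using proj_inj[OF w0(2)] by (auto intro: injI)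
    ultimately have "infinite (preimages F x)"
      using infinite_UNIV_char_0 finite_imageD finite_subset by (metis (no_types, lifting) )
    then show False using fin x_def by simp
  qed
  then obtain w where wL: "w \<in> line a" and cw: "dot3 c (Fmap F w) \<noteq> 0" by blast
  have ind: "cross3 w p \<noteq> 0"
  proof
    assume "cross3 w p = 0"
    then obtain l where "w = smult3 l p" using cross_parallel p0 by blast
    then have "Fmap F w = smult3 (l^d) x" using Fmap_smult[OF F] x_def by simp
    then have "dot3 c (Fmap F w) = 0" using cx dot_smult by simp
    then show False using cw by simp
  qed
  have aw: "dot3 a w = 0" using wL inL by simp
  obtain F0 F1 F2 where FF: "F = (F0,F1,F2)" by (cases F) auto
  have hF: "homog3 d F0" "homog3 d F1" "homog3 d F2" using F by (simp_all add: FF)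
  obtain c0 c1 c2 where cc: "c = (c0,c1,c2)" by (cases c) auto
  define G where "G = smult c0 (lpoly F0 p w) + smult c1 (lpoly F1 p w) + smult c2 (lpoly F2 p w)"
  have polyG: "poly G t = dot3 c (Fmap F (lin3 p w t))" for t
    by (simp add: G_def poly_lpoly FF cc del: lin3.simps)
  have degG: "degree G \<le> d"
    using lpoly_degree_coeff[OF hF(1), of p w] lpoly_degree_coeff[OF hF(2), of p w]
      lpoly_degree_coeff[OF hF(3), of p w] unfolding G_def
    by (intro degree_add_le degree_smult_le[THEN order_trans]) auto
  have coeffG: "coeff G d = dot3 c (Fmap F w)"
    using lpoly_degree_coeff[OF hF(1), of p w] lpoly_degree_coeff[OF hF(2), of p w]
      lpoly_degree_coeff[OF hF(3), of p w] by (simp add: G_def FF cc)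
  have G0: "G \<noteq> 0" using coeffG cw by auto
  have degG': "degree G = d" using degG le_degree[of G d] coeffG cw by simp
  have sqf: "rsquarefree G"
    unfolding rsquarefree_roots
  proof (intro allI notI)
    fix t0 assume rr: "poly G t0 = 0 \<and> poly (pderiv G) t0 = 0"
    then have r: "poly G t0 = 0" and r': "poly (pderiv G) t0 = 0" by auto
    define v where "v = lin3 p w t0"
    have vL: "v \<in> line a" using lin_in[OF ind aw] v_def by simp
    have cv: "dot3 c (Fmap F v) = 0" using r polyG v_def by simp
    have "proj_pt v \<in> preimages F x" using pre[OF vL cv] .
    have "cross3 (Fmap F v) x = 0"
      using perp_cross[OF bF[OF vL] bx eb] cv by (simp add: c_def)
    then obtain l where l: "Fmap F v = smult3 l x" using cross_parallel x0 by blast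
    have "l \<noteq> 0" using Fnz[OF vL] l by (cases x) (auto simp: vec3_zero_iff)
    then have vpre: "Fmap F v \<in> proj_pt x" using l by (auto simp: proj_pt_def)
    have jac: "jacdet F v \<noteq> 0" using reg vL nI[OF vL] vpre inL x_def
      unfolding regular_value_def by blast
    have D1: "((\<lambda>t. poly G t) has_field_derivative dot3 c (Jap F v w)) (at t0)"
      unfolding polyG v_def by (rule dotF_deriv[OF F])
    have cg: "dot3 c (Jap F v w) = 0" using DERIV_unique[OF D1 poly_DERIV] r' by simp
    have "(\<lambda>t. dot3 b (Fmap F (lin3 p w t))) = (\<lambda>t. 0)"
      using bF lin_in[OF ind aw] by auto
    then have D2: "((\<lambda>t. 0) has_field_derivative dot3 b (Jap F v w)) (at t0)"
      using dotF_deriv[OF F, of b p w t0] v_def by simp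
    have bg: "dot3 b (Jap F v w) = 0" using DERIV_unique[OF D2 DERIV_const] .
    have "cross3 w v \<noteq> 0" using ind cross_lin v_def by simp
    moreover have "dot3 (cross3 (Fmap F v) e) (Jap F v w) = 0"
    proof -
      have "dot3 (cross3 (smult3 l x) e) g = l * dot3 (cross3 x e) g" for g
        by (cases x; cases e; cases g) (simp add: algebra_simps)
      then show ?thesis using cg l c_def by simp
    qed
    ultimately have "jacdet F v = 0" using jac_zero[OF F d _ Fnz[OF vL] bF[OF vL] eb bg] by blast
    with jac have False by simp
    then show False by simp
  qed
  define T where "T = {t. poly G t = 0}"
  have finT: "finite T" using poly_roots_finite[OF G0] T_def by simp
  have cardT: "card T = d" using rsquarefree_card[OF sqf] degG' T_def by simp
  have "(\<lambda>t. proj_pt (lin3 p w t)) ` T \<subseteq> preimages F (Fmap F p)"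
  proof
    fix X assume "X \<in> (\<lambda>t. proj_pt (lin3 p w t)) ` T"
    then obtain t where t: "t \<in> T" "X = proj_pt (lin3 p w t)" by blast
    have "dot3 c (Fmap F (lin3 p w t)) = 0" using t(1) polyG T_def by simp
    then show "X \<in> preimages F (Fmap F p)" using pre[OF lin_in[OF ind aw]] t(2) x_def by simp
  qed
  moreover have "inj_on (\<lambda>t. proj_pt (lin3 p w t)) T" using proj_inj[OF ind] by (auto intro: inj_onI)
  ultimately show ?thesis using ind aw finT cardT by blast
qed



lemma dot_smult_left: "dot3 (smult3 c a) v = c * dot3 a v" by (cases a; cases v) (simp add: algebra_simps)

lemma cross_lin2: "cross3 (lin3 p w t) p = smult3 t (cross3 w p)"
  by (cases p; cases w) (simp add: algebra_simps)

lemma smult3_nz: "t \<noteq> 0 \<Longrightarrow> z \<noteq> 0 \<Longrightarrow> smult3 t z \<noteq> 0"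
  by (cases z) (auto simp: vec3_zero_iff)

lemma same_line:
  assumes "dot3 a p = 0" "dot3 a q = 0" "dot3 a' p = 0" "dot3 a' q = 0" "cross3 q p \<noteq> 0"
    "a \<noteq> 0" "a' \<noteq> 0"
  shows "line a = line a'"
proof -
  have cr: "cross3 a (cross3 q p) = 0" if "dot3 a p = 0" "dot3 a q = 0" for a
  proof -
    obtain a0 a1 a2 where aa: "a = (a0,a1,a2)" by (cases a) auto
    obtain p0 p1 p2 where pp: "p = (p0,p1,p2)" by (cases p) auto
    obtain q0 q1 q2 where qq: "q = (q0,q1,q2)" by (cases q) auto
    have h: "a0*p0+a1*p1+a2*p2 = 0" "a0*q0+a1*q1+a2*q2 = 0" using that by (simp_all add: aa pp qq)
    show ?thesis unfolding aa pp qq cross3.simps vec3_zero_iff using h by algebra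
  qed
  obtain l where l: "a = smult3 l (cross3 q p)" using cross_parallel[OF cr[OF assms(1,2)] assms(5)] by blast
  obtain l' where l': "a' = smult3 l' (cross3 q p)" using cross_parallel[OF cr[OF assms(3,4)] assms(5)] by blast
  have "l \<noteq> 0" using l assms(6) by (cases "cross3 q p") (auto simp: vec3_zero_iff)
  moreover have "l' \<noteq> 0" using l' assms(7) by (cases "cross3 q p") (auto simp: vec3_zero_iff)
  ultimately show ?thesis unfolding line_def l l' dot_smult_left by auto
qed

theorem mainTheorem5:
  fixes F :: ratmap and d lam :: nat and p a a' :: vec3
  assumes "ratmap_deg F d" and "dominant F" and "topdeg F lam"
    and "d = lam" and "2 \<le> d"
    and "p \<noteq> 0" and "p \<notin> indet F"
    and "regular_value F (Fmap F p)"
    and "finite (preimages F (Fmap F p))" and "card (preimages F (Fmap F p)) = lam"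
    and "Fmap F p \<notin> indet_image F"
    and "a \<noteq> 0" and "a' \<noteq> 0"
    and "p \<in> line a" and "p \<in> line a'"
    and "line a \<inter> indet F = {}" and "line a' \<inter> indet F = {}"
    and "image_set F (line a) \<noteq> image_set F (line a')"
  shows "\<not> is_line (image_set F (line a)) \<or> \<not> is_line (image_set F (line a'))"
proof (rule ccontr)
  assume "\<not> ?thesis"
  then obtain b b' where b: "b \<noteq> 0" "image_set F (line a) = line b"
    and b': "b' \<noteq> 0" "image_set F (line a') = line b'" unfolding is_line_def by blast
  have d1: "1 \<le> d" using assms(5) by simp
  have ap: "dot3 a p = 0" "dot3 a' p = 0" using assms(14,15) by (simp_all add: line_def)
  define pre where "pre = preimages F (Fmap F p)"
  obtain w T where wT: "cross3 w p \<noteq> 0" "dot3 a w = 0" "finite T" "card T = d"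
     "inj_on (\<lambda>t. proj_pt (lin3 p w t)) T" "(\<lambda>t. proj_pt (lin3 p w t)) ` T \<subseteq> pre"
    using main_line[OF assms(1) d1 assms(6) ap(1) assms(12) assms(16) assms(8) assms(9) b(2) b(1)] pre_def
    by blast
  obtain w' T' where wT': "cross3 w' p \<noteq> 0" "dot3 a' w' = 0" "finite T'" "card T' = d"
     "inj_on (\<lambda>t. proj_pt (lin3 p w' t)) T'" "(\<lambda>t. proj_pt (lin3 p w' t)) ` T' \<subseteq> pre"
    using main_line[OF assms(1) d1 assms(6) ap(2) assms(13) assms(17) assms(8) assms(9) b'(2) b'(1)] pre_def
    by blast
  have finpre: "finite pre" and cpre: "card pre = d" using assms(9,10,4) pre_def by simp_all
  have E1: "(\<lambda>t. proj_pt (lin3 p w t)) ` T = pre"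
    using card_subset_eq[OF finpre wT(6)] card_image[OF wT(5)] wT(4) cpre by simp
  have E2: "(\<lambda>t. proj_pt (lin3 p w' t)) ` T' = pre"
    using card_subset_eq[OF finpre wT'(6)] card_image[OF wT'(5)] wT'(4) cpre by simp
  have "\<not> T \<subseteq> {0}"
  proof
    assume "T \<subseteq> {0}"
    then have "card T \<le> 1" using card_mono[of "{0}" T] by simp
    then show False using wT(4) assms(5) by simp
  qed
  then obtain t where t: "t \<in> T" "t \<noteq> 0" by blast
  define q where "q = lin3 p w t"
  have "proj_pt q \<in> pre" using E1 t q_def by blast
  then obtain t' where t': "proj_pt q = proj_pt (lin3 p w' t')" using E2 by auto
  have "q \<in> proj_pt (lin3 p w' t')" using t' mem_proj_pt by metis
  then obtain mu where mu: "q = smult3 mu (lin3 p w' t')" unfolding proj_pt_def by blast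
  have a'q: "dot3 a' q = 0" unfolding mu dot_smult using lin_line[OF ap(2) wT'(2)] by simp
  have aq: "dot3 a q = 0" unfolding q_def using lin_line[OF ap(1) wT(2)] by simp
  have cq: "cross3 q p \<noteq> 0" unfolding q_def cross_lin2 using smult3_nz t(2) wT(1) by blast
  have "line a = line a'" using same_line[OF ap(1) aq ap(2) a'q cq assms(12,13)] .
  then show False using assms(18) by simp
qed

end
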